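(* Fix an integer $\theta\ge1$ and let $(U^\theta_n)_{n\ge0}$ be defined by $U^\theta_0=\dots=U^\theta_{\theta+1}=0$, $U^\theta_{\theta+2}=U^\theta_{\theta+3}=1$ and $$U^\theta_n=1+\frac{1}{n-\theta-1}\sum_{k=\theta}^{n-2}\left(U^\theta_k+U^\theta_{n-k-2}\right),\qquad n\ge\theta+2.$$ Then, as $n\to\infty$, $U^\theta_n\sim K_\theta\, n$ with $$K_\theta=e^{-1-H_{\theta+1}}\int_0^1 e^{t+\left(t+\frac{t^2}{2}+\dots+\frac{t^{\theta+1}}{\theta+1}\right)}\,dt,$$ where $H_{\theta+1}=1+\frac12+\dots+\frac{1}{\theta+1}$. In particular $K_1\approx 0.340633$, $K_2\approx0.285497$, $K_3\approx0.247908$.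
   Context: $U^\theta_n$ is the expected number of base pairs of a quasi-random saturated structure on $n$ positions, generated as follows: if the current interval has fewer than $\theta+2$ positions, stop; otherwise pair its first position with a position $u$ chosen uniformly among positions $\theta+2,\dots,m$ of the interval (where $m$ is its length), and recurse independently on the interval strictly between the two paired positions and on the interval strictly after $u$. *)

theory Defs
  imports "HOL-Analysis.Analysis" "HOL-Library.Landau_Symbols"
begin

text \<open>The sequence U^theta_n, given by U_n = 0 for n < theta + 2 and
  U_n = 1 + 1/(n - theta - 1) * sum_{k=theta}^{n-2} (U_k + U_{n-k-2}) for n >= theta + 2.
  (This reproduces U_{theta+2} = U_{theta+3} = 1.)\<close>

function U :: "nat \<Rightarrow> nat \<Rightarrow> real" where
  "U \<theta> n = (if n < \<theta> + 2 then 0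
     else 1 + (1 / (real n - real \<theta> - 1)) *
            (\<Sum>k = \<theta>..n - 2. U \<theta> k + U \<theta> (n - k - 2)))"
  by pat_completeness auto
termination
  by (relation "Wellfounded.measure snd") auto

definition K :: "nat \<Rightarrow> real" where
  "K \<theta> = exp (- 1 - harm (\<theta> + 1)) *
      integral {0..1} (\<lambda>t. exp (t + (\<Sum>j = 1..\<theta> + 1. t ^ j / real j)))"

end

theory Submission
  imports Defs
begin
declare U.simps[simp del]
context fixes \<theta> :: nat begin

lemma U_small: "n < \<theta> + 2 \<Longrightarrow> U \<theta> n = 0"
  by (subst U.simps) simp

lemma U_big: "\<theta> + 2 \<le> n \<Longrightarrow> U \<theta> n = 1 + (1 / (real n - real \<theta> - 1)) *
            (\<Sum>k = \<theta>..n - 2. U \<theta> k + U \<theta> (n - k - 2))"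
  by (subst U.simps) simp

definition P :: "nat \<Rightarrow> real" where "P N = (\<Sum>k<N. U \<theta> k)"

lemma sum1: assumes "\<theta> + 2 \<le> n" shows "(\<Sum>k=\<theta>..n-2. U \<theta> k) = P (n-1)"
  unfolding P_def
  by (rule sym, rule sum.mono_neutral_right) (use assms U_small in auto)

lemma sum2: assumes "\<theta> + 2 \<le> n" shows "(\<Sum>k=\<theta>..n-2. U \<theta> (n-k-2)) = P (n-\<theta>-1)"
proof -
  have "(\<Sum>k=\<theta>..n-2. U \<theta> (n-k-2)) = (\<Sum>j=0..n-2-\<theta>. U \<theta> j)"
    by (rule sum.reindex_bij_witness[of _ "\<lambda>j. n-2-j" "\<lambda>k. n-2-k"]) (use assms in auto)
  also have "{0..n-2-\<theta>} = {..<n-\<theta>-1}" using assms by auto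
  finally show ?thesis unfolding P_def .
qed

lemma recA: assumes "\<theta> + 1 \<le> n"
  shows "(real n - real \<theta> - 1) * (U \<theta> n - 1) = P (n-1) + P (n-\<theta>-1)"
proof (cases "n = \<theta> + 1")
  case True
  have "P \<theta> = 0" "P 0 = 0" unfolding P_def by (auto simp: U_small)
  then show ?thesis using True by simp
next
  case False
  then have n: "\<theta> + 2 \<le> n" using assms by simp
  have "(real n - real \<theta> - 1) * (U \<theta> n - 1) = (\<Sum>k = \<theta>..n - 2. U \<theta> k + U \<theta> (n - k - 2))"
    using n by (subst U_big[OF n]) (simp add: field_simps)
  also have "\<dots> = P (n-1) + P (n-\<theta>-1)"
    by (subst sum.distrib) (simp only: sum1[OF n] sum2[OF n])
  finally show ?thesis .
qed

definition d :: "nat \<Rightarrow> real" where "d n = U \<theta> n - U \<theta> (n-1)"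
definition c :: "nat \<Rightarrow> real" where "c n = d n - d (n-1)"

lemma recB: assumes "\<theta> + 1 \<le> n"
  shows "(real n - real \<theta>) * d (n+1) + d n = 1 + U \<theta> (n-\<theta>-1)"
proof -
  have a: "(real (n+1) - real \<theta> - 1) * (U \<theta> (n+1) - 1) = P n + P (n-\<theta>)"
    using recA[of "n+1"] assms by (simp add: Suc_diff_le)
  have b: "(real n - real \<theta> - 1) * (U \<theta> n - 1) = P (n-1) + P (n-\<theta>-1)"
    using recA assms by simp
  have p1: "P n = P (n-1) + U \<theta> (n-1)" unfolding P_def using assms
    by (metis Suc_diff_1 add_gr_0 less_le_trans sum.lessThan_Suc zero_less_one)
  have p2: "P (n-\<theta>) = P (n-\<theta>-1) + U \<theta> (n-\<theta>-1)" unfolding P_def using assms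
    by (metis Suc_diff_Suc Suc_eq_plus1 diff_diff_left less_eq_Suc_le sum.lessThan_Suc)
  from a b p1 p2 show ?thesis unfolding d_def by (simp add: algebra_simps)
qed

lemma recC: assumes "\<theta> + 1 \<le> n"
  shows "(real n + 1 - real \<theta>) * c (n+2) + c (n+1) + d (n+1) - d (n-\<theta>) = 0"
proof -
  have a: "(real (n+1) - real \<theta>) * d (n+2) + d (n+1) = 1 + U \<theta> (n-\<theta>)"
    using recB[of "n+1"] assms by (simp add: Suc_diff_le)
  have b: "(real n - real \<theta>) * d (n+1) + d n = 1 + U \<theta> (n-\<theta>-1)" using recB assms by simp
  have e: "U \<theta> (n-\<theta>) - U \<theta> (n-\<theta>-1) = d (n-\<theta>)" unfolding d_def by simp
  have c2: "c (n+2) = d (n+2) - d (n+1)" "c (n+1) = d (n+1) - d n" unfolding c_def by auto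
  from a b e show ?thesis unfolding c2 by (simp add: algebra_simps)
qed

lemma d_small: "n \<le> \<theta> + 1 \<Longrightarrow> d n = 0"
  unfolding d_def by (simp add: U_small)

lemma c_small: "n \<le> \<theta> + 1 \<Longrightarrow> c n = 0"
  unfolding c_def by (simp add: d_small)

lemma U_first: "U \<theta> (\<theta>+2) = 1"
proof -
  have "P (\<theta>+1) = 0" "P 1 = 0" unfolding P_def by (auto simp: U_small)
  moreover have "(real (\<theta>+2) - real \<theta> - 1) * (U \<theta> (\<theta>+2) - 1) = P (\<theta>+1) + P 1"
    using recA[of "\<theta>+2"] by (simp add: numeral_2_eq_2)
  moreover have "real (\<theta>+2) - real \<theta> - 1 = 1" by simp
  ultimately show ?thesis by (metis add.right_neutral eq_iff_diff_eq_0 mult_1)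
qed

lemma c_first: "c (\<theta>+2) = 1"
  unfolding c_def d_def using U_first by (simp add: U_small)

lemma d_shift: "d (k+m) - d k = (\<Sum>j<m. c (k+m-j))"
proof (induction m)
  case 0 then show ?case by simp
next
  case (Suc m)
  have "(\<Sum>j<Suc m. c (k + Suc m - j)) = c (k + Suc m) + (\<Sum>j<m. c (k+m-j))"
    by (subst sum.lessThan_Suc_shift) simp
  also have "\<dots> = d (k + Suc m) - d k" using Suc unfolding c_def by simp
  finally show ?case by simp
qed

lemma recG: "(real k + 1) * c (k+\<theta>+2) = (if k = 0 then 1 else 0) - c (k+\<theta>+1) - (\<Sum>j<\<theta>+1. c (k+\<theta>+1-j))"
proof (cases "k = 0")
  case True
  have "(\<Sum>j<\<theta>+1. c (\<theta>+1-j)) = 0" by (intro sum.neutral) (auto simp: c_small)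
  then show ?thesis using True c_first c_small[of "\<theta>+1"] by (simp add: add.commute)
next
  case False
  have "(real (k+\<theta>) + 1 - real \<theta>) * c (k+\<theta>+2) + c (k+\<theta>+1) + d (k+\<theta>+1) - d (k+\<theta>-\<theta>) = 0"
    using recC[of "k+\<theta>"] False by simp
  moreover have "d (k+(\<theta>+1)) - d k = (\<Sum>j<\<theta>+1. c (k+(\<theta>+1)-j))" by (rule d_shift)
  ultimately show ?thesis using False by (simp add: algebra_simps)
qed

lemma c_bound: obtains B where "B \<ge> 0" "\<And>i. \<bar>c i\<bar> \<le> B / 2^i"
proof -
  define N where "N = \<theta>+2+(\<theta>+2)*2^(\<theta>+1)"
  define B where "B = (\<Sum>i\<le>N. \<bar>c i\<bar> * 2^i)"
  have B0: "B \<ge> 0" unfolding B_def by (intro sum_nonneg) auto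
  have "\<bar>c i\<bar> \<le> B/2^i" for i
  proof (induction i rule: less_induct)
    case (less i)
    show ?case
    proof (cases "i \<le> N")
      case True
      then have "\<bar>c i\<bar> * 2^i \<le> B" unfolding B_def by (intro member_le_sum) auto
      then show ?thesis by (simp add: field_simps)
    next
      case False
      define k where "k = i - \<theta> - 2"
      have pos0: "(0::nat) < (\<theta>+2)*2^(\<theta>+1)" by simp
      then have pos: "(1::nat) \<le> (\<theta>+2)*2^(\<theta>+1)" by linarith
      have ik: "i = k + \<theta> + 2" and k1: "k \<ge> 1" using False pos unfolding N_def k_def by linarith+
      have kbn: "(\<theta>+2)*2^(\<theta>+1) \<le> k + 1" using False unfolding N_def k_def by linarith
      have kb: "real (\<theta>+2) * 2^(\<theta>+1) \<le> real k + 1"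
      proof -
        have "real ((\<theta>+2)*2^(\<theta>+1)) \<le> real (k+1)" using kbn by (simp only: of_nat_le_iff)
        then show ?thesis by (simp add: algebra_simps)
      qed
      have rec: "(real k + 1) * c i = - c (k+\<theta>+1) - (\<Sum>j<\<theta>+1. c (k+\<theta>+1-j))"
        using recG[of k] k1 ik by simp
      define M where "M = B * 2^(\<theta>+1) / 2^i"
      have bj: "\<bar>c (k+\<theta>+1-j)\<bar> \<le> M" if "j < \<theta>+1" for j
      proof -
        have "\<bar>c (k+\<theta>+1-j)\<bar> \<le> B / 2^(k+\<theta>+1-j)" using less.IH[of "k+\<theta>+1-j"] ik by auto
        also have "\<dots> \<le> B / 2^(k+1)"
        proof -
          have "(2::real)^(k+1) \<le> 2^(k+\<theta>+1-j)" using that by (intro power_increasing) auto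
          then show ?thesis using B0 by (intro divide_left_mono) auto
        qed
        also have "B / 2^(k+1) = M" unfolding M_def ik
          by (simp add: power_add field_simps)
        finally show ?thesis .
      qed
      have "\<bar>(real k + 1) * c i\<bar> \<le> \<bar>c (k+\<theta>+1)\<bar> + (\<Sum>j<\<theta>+1. \<bar>c (k+\<theta>+1-j)\<bar>)"
        unfolding rec using abs_triangle_ineq4[of "- c (k+\<theta>+1)" "(\<Sum>j<\<theta>+1. c (k+\<theta>+1-j))"]
          sum_abs[of "\<lambda>j. c (k+\<theta>+1-j)" "{..<\<theta>+1}"] by simp
      also have "\<dots> \<le> M + (\<Sum>j<\<theta>+1. M)"
        using bj[of 0] by (intro add_mono sum_mono bj) auto
      also have "\<dots> = real (\<theta>+2) * M" by (simp add: algebra_simps)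
      also have "\<dots> = (real (\<theta>+2) * 2^(\<theta>+1)) * (B/2^i)" unfolding M_def by simp
      also have "\<dots> \<le> (real k + 1) * (B/2^i)" using B0 kb by (intro mult_right_mono) auto
      finally have "(real k + 1) * \<bar>c i\<bar> \<le> (real k + 1) * (B/2^i)" by (simp add: abs_mult)
      moreover have "(0::real) < real k + 1" by simp
      ultimately show ?thesis by (simp only: mult_le_cancel_left_pos)
    qed
  qed
  with B0 that show ?thesis by blast
qed

lemma c_summable: assumes "\<bar>x\<bar> < 2" shows "summable (\<lambda>n. c n * x^n)"
proof -
  obtain B where B0: "B \<ge> 0" and Bc: "\<And>i. \<bar>c i\<bar> \<le> B / 2^i" using c_bound by blast
  have g: "norm (\<bar>x\<bar>/2) < 1" using assms by simp
  have sg: "summable (\<lambda>n. B * (\<bar>x\<bar>/2)^n)" by (rule summable_mult[OF summable_geometric[OF g]])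
  have le: "norm (c n * x^n) \<le> B * (\<bar>x\<bar>/2)^n" for n
  proof -
    have "norm (c n * x^n) = \<bar>c n\<bar> * \<bar>x\<bar>^n" by (simp add: abs_mult power_abs)
    also have "\<dots> \<le> (B/2^n) * \<bar>x\<bar>^n" by (rule mult_right_mono[OF Bc]) simp
    also have "\<dots> = B * (\<bar>x\<bar>/2)^n" by (simp add: power_divide)
    finally show ?thesis .
  qed
  show ?thesis by (rule summable_comparison_test[OF _ sg]) (use le in blast)
qed

lemma c_summable1: "summable c"
  using c_summable[of 1] by simp

lemma nc_summable: "summable (\<lambda>n. real n * c n)"
proof -
  have "summable (\<lambda>n. diffs c n * 1^n)"
    by (rule termdiff_converges[where K=2]) (auto intro: c_summable)
  then have "summable (\<lambda>n. real (Suc n) * c (Suc n))" by (simp add: diffs_def)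
  then show ?thesis by (subst summable_Suc_iff[symmetric]) simp
qed

lemma U_sum_d: "U \<theta> n = (\<Sum>i\<le>n. d i)"
  by (induction n) (auto simp: d_def U_small)

lemma d_sum_c: "d n = (\<Sum>i\<le>n. c i)"
  by (induction n) (auto simp: c_def d_small)

lemma U_repr: "U \<theta> n = (real n + 1) * d n - (\<Sum>i\<le>n. real i * c i)"
proof (induction n)
  case 0 then show ?case by (simp add: U_small d_small)
next
  case (Suc n)
  have "U \<theta> (Suc n) = U \<theta> n + d (Suc n)" by (simp add: d_def)
  then show ?case using Suc by (simp add: c_def algebra_simps)
qed

lemma U_over_n: "(\<lambda>n. U \<theta> n / real n) \<longlonglongrightarrow> suminf c"
proof -
  have d: "d \<longlonglongrightarrow> suminf c"
    using summable_LIMSEQ'[OF c_summable1] by (simp add: d_sum_c[abs_def])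
  have s: "(\<lambda>n. \<Sum>i\<le>n. real i * c i) \<longlonglongrightarrow> (\<Sum>i. real i * c i)"
    by (rule summable_LIMSEQ'[OF nc_summable])
  have "(\<lambda>n. (real (Suc n) / real n) * d n - (\<Sum>i\<le>n. real i * c i) * (1 / real n))
      \<longlonglongrightarrow> 1 * suminf c - (\<Sum>i. real i * c i) * 0"
    by (intro tendsto_intros d s LIMSEQ_Suc_n_over_n lim_inverse_n')
  moreover have "U \<theta> n / real n = (real (Suc n) / real n) * d n - (\<Sum>i\<le>n. real i * c i) * (1 / real n)" for n
  proof -
    have "U \<theta> n / real n = ((real n + 1) * d n) / real n - (\<Sum>i\<le>n. real i * c i) / real n"
      by (subst U_repr) (simp add: diff_divide_distrib)
    then show ?thesis by (simp add: add.commute)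
  qed
  ultimately show ?thesis by (simp only:) simp
qed

lemma c_summable_shift: assumes "\<bar>x\<bar> < 2" shows "summable (\<lambda>n. c (n+m) * x^n)"
proof -
  obtain B where B0: "B \<ge> 0" and Bc: "\<And>i. \<bar>c i\<bar> \<le> B / 2^i" using c_bound by blast
  have g: "norm (\<bar>x\<bar>/2) < 1" using assms by simp
  have sg: "summable (\<lambda>n. B * (\<bar>x\<bar>/2)^n)" by (rule summable_mult[OF summable_geometric[OF g]])
  have le: "norm (c (n+m) * x^n) \<le> B * (\<bar>x\<bar>/2)^n" for n
  proof -
    have b2: "B / 2^(n+m) \<le> B / 2^n"
    proof -
      have "(2::real)^n \<le> 2^(n+m)" by (intro power_increasing) auto
      then show ?thesis using B0 by (intro divide_left_mono) auto
    qed
    have "norm (c (n+m) * x^n) = \<bar>c (n+m)\<bar> * \<bar>x\<bar>^n" by (simp add: abs_mult power_abs)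
    also have "\<dots> \<le> (B/2^n) * \<bar>x\<bar>^n" by (rule mult_right_mono[OF order.trans[OF Bc b2]]) simp
    also have "\<dots> = B * (\<bar>x\<bar>/2)^n" by (simp add: power_divide)
    finally show ?thesis .
  qed
  show ?thesis by (rule summable_comparison_test[OF _ sg]) (use le in blast)
qed

definition C :: "real \<Rightarrow> real" where "C x = (\<Sum>n. c (n+\<theta>+1) * x^n)"

lemma suminf_c_C: "suminf c = C 1"
proof -
  have "suminf c = (\<Sum>n. c (n + (\<theta>+1))) + (\<Sum>i<\<theta>+1. c i)"
    by (rule suminf_split_initial_segment[OF c_summable1])
  moreover have "(\<Sum>i<\<theta>+1. c i) = 0" by (intro sum.neutral) (auto simp: c_small)
  ultimately show ?thesis unfolding C_def by (simp add: add.assoc)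
qed

lemma C_zero: "C 0 = 0"
proof -
  have "C 0 = c (0+\<theta>+1)" unfolding C_def by (rule powser_zero)
  then show ?thesis by (simp add: c_small)
qed

lemma C_deriv: assumes "\<bar>x\<bar> < 2"
  shows "(C has_field_derivative (\<Sum>n. diffs (\<lambda>n. c (n+\<theta>+1)) n * x^n)) (at x)"
proof -
  have "((\<lambda>x. \<Sum>n. c (n+\<theta>+1) * x^n) has_field_derivative (\<Sum>n. diffs (\<lambda>n. c (n+\<theta>+1)) n * x^n)) (at x)"
    by (rule termdiffs_strong'[where K=2]) (use assms c_summable_shift[of _ "\<theta>+1"] in \<open>auto simp: add.assoc\<close>)
  then show ?thesis unfolding C_def[abs_def] .
qed

lemma C_ode: assumes "\<bar>x\<bar> < 2"
  shows "(\<Sum>n. diffs (\<lambda>n. c (n+\<theta>+1)) n * x^n) = 1 - C x - (\<Sum>j<\<theta>+1. x^j) * C x"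
proof -
  have s1: "(\<lambda>n. if n = 0 then 1 else 0) sums (1::real)"
    using sums_single[of 0 "\<lambda>_. (1::real)"] by simp
  have s2: "(\<lambda>n. c (n+\<theta>+1) * x^n) sums C x"
    unfolding C_def using c_summable_shift[OF assms, of "\<theta>+1"]
    by (intro summable_sums) (simp add: add.assoc)
  have s3: "(\<lambda>n. c (n+\<theta>+1-j) * x^n) sums (x^j * C x)" if j: "j \<in> {..<\<theta>+1}" for j
  proof -
    define f where "f n = c (n+\<theta>+1-j) * x^n" for n
    have "(\<lambda>i. x^j * (c (i+\<theta>+1) * x^i)) sums (x^j * C x)" by (rule sums_mult[OF s2])
    moreover have "(\<lambda>i. f (i+j)) = (\<lambda>i. x^j * (c (i+\<theta>+1) * x^i))"
      using j by (auto simp: f_def power_add algebra_simps)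
    ultimately have "(\<lambda>i. f (i+j)) sums (x^j * C x)" by simp
    then have "f sums (x^j * C x + (\<Sum>i<j. f i))" by (simp only: sums_iff_shift)
    moreover have "(\<Sum>i<j. f i) = 0" unfolding f_def using j by (intro sum.neutral) (auto simp: c_small)
    ultimately show ?thesis unfolding f_def by simp
  qed
  have s4: "(\<lambda>n. \<Sum>j<\<theta>+1. c (n+\<theta>+1-j) * x^n) sums (\<Sum>j<\<theta>+1. x^j * C x)"
    by (rule sums_sum[OF s3])
  have s: "(\<lambda>n. (if n = 0 then 1 else 0) - c (n+\<theta>+1) * x^n - (\<Sum>j<\<theta>+1. c (n+\<theta>+1-j) * x^n))
      sums (1 - C x - (\<Sum>j<\<theta>+1. x^j * C x))"
    by (intro sums_diff s1 s2 s4)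
  have eq: "diffs (\<lambda>n. c (n+\<theta>+1)) n * x^n =
      (if n = 0 then 1 else 0) - c (n+\<theta>+1) * x^n - (\<Sum>j<\<theta>+1. c (n+\<theta>+1-j) * x^n)" for n
  proof -
    have "diffs (\<lambda>n. c (n+\<theta>+1)) n = (real n + 1) * c (n+\<theta>+2)" by (simp add: diffs_def)
    also have "\<dots> = (if n = 0 then 1 else 0) - c (n+\<theta>+1) - (\<Sum>j<\<theta>+1. c (n+\<theta>+1-j))"
      by (rule recG)
    finally have h: "diffs (\<lambda>n. c (n+\<theta>+1)) n = (if n = 0 then 1 else 0) - c (n+\<theta>+1) - (\<Sum>j<\<theta>+1. c (n+\<theta>+1-j))" .
    show ?thesis unfolding h by (simp add: left_diff_distrib sum_distrib_right distrib_right)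
  qed
  have "(\<lambda>n. diffs (\<lambda>n. c (n+\<theta>+1)) n * x^n) sums (1 - C x - (\<Sum>j<\<theta>+1. x^j * C x))"
    using s unfolding eq .
  then have "(\<Sum>n. diffs (\<lambda>n. c (n+\<theta>+1)) n * x^n) = 1 - C x - (\<Sum>j<\<theta>+1. x^j * C x)"
    by (rule sums_unique[symmetric])
  also have "(\<Sum>j<\<theta>+1. x^j * C x) = (\<Sum>j<\<theta>+1. x^j) * C x" by (rule sum_distrib_right[symmetric])
  finally show ?thesis .
qed

definition F :: "real \<Rightarrow> real" where "F t = exp (t + (\<Sum>j = 1..\<theta> + 1. t ^ j / real j))"

lemma P_deriv: "((\<lambda>x. \<Sum>j = 1..\<theta> + 1. x ^ j / real j) has_real_derivative (\<Sum>j<\<theta>+1. x^j)) (at x)"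
proof -
  have "((\<lambda>x. \<Sum>j = 1..\<theta> + 1. x ^ j / real j) has_real_derivative (\<Sum>j = 1..\<theta> + 1. x^(j-1))) (at x)"
  proof (rule DERIV_sum)
    fix j assume j: "j \<in> {1..\<theta>+1}"
    have "((\<lambda>x. x ^ j / real j) has_real_derivative (real j * x^(j - Suc 0)) / real j) (at x)"
      by (intro DERIV_cdivide DERIV_pow)
    then show "((\<lambda>x. x ^ j / real j) has_real_derivative x^(j-1)) (at x)" using j by simp
  qed
  moreover have "(\<Sum>j = 1..\<theta> + 1. x^(j-1)) = (\<Sum>j<\<theta>+1. x^j)"
    by (simp only: One_nat_def sum.atLeast1_atMost_eq) simp
  ultimately show ?thesis by simp
qed

lemma B_deriv: assumes "\<bar>x\<bar> < 2" shows "((\<lambda>x. C x * F x) has_real_derivative F x) (at x)"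
proof -
  define C' where "C' = (\<Sum>n. diffs (\<lambda>n. c (n+\<theta>+1)) n * x^n)"
  have dF: "(F has_real_derivative F x * (1 + (\<Sum>j<\<theta>+1. x^j))) (at x)"
    unfolding F_def[abs_def] by (intro DERIV_chain2[OF DERIV_exp] DERIV_add DERIV_ident P_deriv)
  have dC: "(C has_real_derivative C') (at x)" using C_deriv[OF assms] by (simp add: C'_def)
  have "((\<lambda>x. C x * F x) has_real_derivative C' * F x + (F x * (1 + (\<Sum>j<\<theta>+1. x^j))) * C x) (at x)"
    by (rule DERIV_mult[OF dC dF])
  moreover have "C' * F x + (F x * (1 + (\<Sum>j<\<theta>+1. x^j))) * C x = F x"
    unfolding C'_def C_ode[OF assms] by (simp add: algebra_simps)
  ultimately show ?thesis by simp
qed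

lemma F_integral: "(F has_integral (C 1 * F 1)) {0..1}"
proof -
  have "(F has_integral (C 1 * F 1 - C 0 * F 0)) {0..1}"
  proof (rule fundamental_theorem_of_calculus)
    fix x :: real assume "x \<in> {0..1}"
    then have "\<bar>x\<bar> < 2" by auto
    then show "((\<lambda>x. C x * F x) has_vector_derivative F x) (at x within {0..1})"
      using B_deriv has_real_derivative_iff_has_vector_derivative has_field_derivative_at_within by blast
  qed simp
  then show ?thesis by (simp add: C_zero)
qed

lemma F1: "F 1 = exp (1 + harm (\<theta>+1))"
  unfolding F_def harm_def by (simp add: inverse_eq_divide)

lemma K_eq: "K \<theta> = C 1"
proof -
  have I: "integral {0..1} F = C 1 * exp (1 + harm (\<theta>+1))"
    using integral_unique[OF F_integral] F1 by simp
  have "K \<theta> = exp (- 1 - harm (\<theta> + 1)) * integral {0..1} F"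
    unfolding K_def F_def[abs_def] by (rule refl)
  also have "\<dots> = exp (- 1 - harm (\<theta> + 1)) * (C 1 * exp (1 + harm (\<theta>+1)))" by (simp only: I)
  also have "\<dots> = C 1 * (exp (- 1 - harm (\<theta> + 1)) * exp (1 + harm (\<theta>+1)))" by simp
  also have "exp (- 1 - harm (\<theta> + 1)) * exp (1 + harm (\<theta>+1)) = 1"
    by (simp add: exp_add[symmetric])
  finally show ?thesis by simp
qed

lemma K_pos: "K \<theta> > 0"
proof -
  have one: "((\<lambda>x::real. 1::real) has_integral 1) {0..1::real}"
    using has_integral_const_real[of "1::real" 0 1] by simp
  have "1 \<le> C 1 * F 1"
  proof (rule has_integral_le[OF one F_integral])
    fix x :: real assume "x \<in> {0..1}"
    then have x0: "0 \<le> x" by simp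
    have "0 \<le> (\<Sum>j = 1..\<theta> + 1. x ^ j / real j)" by (rule sum_nonneg) (use x0 in simp)
    then have "0 \<le> x + (\<Sum>j = 1..\<theta> + 1. x ^ j / real j)" using x0 by linarith
    then show "1 \<le> F x" unfolding F_def by simp
  qed
  moreover have "F 1 > 0" unfolding F_def by simp
  ultimately have "C 1 > 0" by (smt (verit) mult_nonpos_nonneg)
  then show ?thesis using K_eq by simp
qed

end

theorem mainTheorem10:
  fixes \<theta> :: nat
  assumes "\<theta> \<ge> 1"
  shows "(\<lambda>n. U \<theta> n) \<sim>[at_top] (\<lambda>n. K \<theta> * real n)"
proof -
  have "(\<lambda>n. U \<theta> n / real n) \<longlonglongrightarrow> K \<theta>"
    using U_over_n[of \<theta>] by (simp add: suminf_c_C K_eq)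
  moreover have "K \<theta> \<noteq> 0" using K_pos[of \<theta>] by simp
  ultimately show ?thesis by (rule asymp_equivI'_const)
qed

end
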